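(* Let $C_i=(Q_i,s_i,D_i,E_i)$, $i\in\{1,2\}$, be finite charts. If $s_1\sim s_2$ (i.e. $C_1\sim C_2$), then $\mathsf{bd}([C_1],[C_2])=0$. Otherwise $\mathsf{bd}([C_1],[C_2])=2^{-n}$, where $n\in\mathbb{N}$ is the largest natural number such that $s_1\sim^{(n)}s_2$.
   Context: Fix a set $V=\{v_1,v_2,\dots\}$ of variables and a set $\Sigma$ of letters. A prechart is a triple $(Q,D,E)$ with $D\subseteq Q\times\Sigma\times Q$ and $E\subseteq Q\times V$ finite relations; write $q\xrightarrow{a}q'$ for $(q,a,q')\in D$, $q\rhd v$ for $(q,v)\in E$, $E(q)=\{v\mid (q,v)\in E\}$. Equivalently a prechart is a pair $(Q,\beta)$ with $\beta:Q\to P_{\mathrm{fin}}(\Sigma\times Q+V)$, $\beta(q)=\{(a,q')\mid q\xrightarrow{a}q'\}\cup E(q)$. A chart $(Q,s,D,E)$ is a prechart with a start state $s\in Q$; it is finite if $Q$ is finite. A bisimulation between precharts $(Q_1,D_1,E_1)$, $(Q_2,D_2,E_2)$ is $R\subseteq Q_1\times Q_2$ such that whenever $(q_1,q_2)\in R$: $E_1(q_1)=E_2(q_2)$; if $q_1\xrightarrow{a}q_1'$ there is $q_2'$ with $q_2\xrightarrow{a}q_2'$ and $(q_1',q_2')\in R$; and symmetrically. States are bisimilar ($\sim$) if related by some bisimulation; charts are bisimilar if their start states are. Stratified bisimilarity: $q_1\sim^{(0)}q_2$ always; $q_1\sim^{(n+1)}q_2$ iff $E_1(q_1)=E_2(q_2)$,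 every $q_1\xrightarrow{a}q_1'$ is matched by some $q_2\xrightarrow{a}q_2'$ with $q_1'\sim^{(n)}q_2'$, and symmetrically. $\Omega$ is the set of finite charts modulo bisimilarity, made into a prechart by $[(Q,s,D,E)]\xrightarrow{a}[(Q,s',D,E)]$ iff $s\xrightarrow{a}s'$ and $[(Q,s,D,E)]\rhd v$ iff $s\rhd v$. Behavioural distance: a 1-bounded pseudometric on $X$ is $d:X\times X\to[0,1]$ with $d(x,x)=0$, symmetry and triangle inequality; $D_X$ denotes the set of these, ordered pointwise (a complete lattice). For $d\in D_X$ define $d^\uparrow$ on $\Sigma\times X+V$ by $d^\uparrow((a,x),(a,y))=\tfrac12 d(x,y)$, $d^\uparrow(m,n)=0$ if $m=n$, and $d^\uparrow(m,n)=1$ otherwise. The Hausdorff lifting is $\mathcal H(d)(A,B)=\max\{\sup_{x\in A}\inf_{y\in B}d(x,y),\ \sup_{y\in B}\inf_{x\in A}d(y,x)\}$ for finite $A,B\subseteq X$, with $\sup\emptyset=0$ and $\inf\emptyset=1$. For a prechart $(Q,\beta)$, $\Phi_\beta:D_Q\to D_Q$ is $\Phi_\beta(d)(q_1,q_2)=\mathcal H(d^\uparrow)(\beta(q_1),\beta(q_2))$; it is monotone and $\mathsf{bd}_\beta$ denotes its least fixpoint. $\mathsf{bd}$ denotes $\mathsf{bd}_\beta$ for the prechart $\Omega$. *)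

theory Defs
  imports Complex_Main
begin

text \<open>A chart (Q, s, D, E): states Q, start state s, transitions D, variable outputs E.
  Letters have type 'a, variables type 'v.\<close>

type_synonym ('q, 'a, 'v) chart = "'q set \<times> 'q \<times> ('q \<times> 'a \<times> 'q) set \<times> ('q \<times> 'v) set"

definition finite_chart :: "('q, 'a, 'v) chart \<Rightarrow> bool" where
  "finite_chart C = (case C of (Q, s, D, E) \<Rightarrow>
     finite Q \<and> s \<in> Q \<and> D \<subseteq> Q \<times> UNIV \<times> Q \<and> E \<subseteq> Q \<times> UNIV \<and> finite D \<and> finite E)"

definition outs :: "('q \<times> 'v) set \<Rightarrow> 'q \<Rightarrow> 'v set" where
  "outs E q = {v. (q, v) \<in> E}"

definition is_bisim ::
  "'q1 set \<Rightarrow> ('q1 \<times> 'a \<times> 'q1) set \<Rightarrow> ('q1 \<times> 'v) set \<Rightarrow>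
   'q2 set \<Rightarrow> ('q2 \<times> 'a \<times> 'q2) set \<Rightarrow> ('q2 \<times> 'v) set \<Rightarrow> ('q1 \<times> 'q2) set \<Rightarrow> bool" where
  "is_bisim Q1 D1 E1 Q2 D2 E2 R \<longleftrightarrow> R \<subseteq> Q1 \<times> Q2 \<and>
     (\<forall>(q1, q2) \<in> R. outs E1 q1 = outs E2 q2 \<and>
        (\<forall>a q1'. (q1, a, q1') \<in> D1 \<longrightarrow> (\<exists>q2'. (q2, a, q2') \<in> D2 \<and> (q1', q2') \<in> R)) \<and>
        (\<forall>a q2'. (q2, a, q2') \<in> D2 \<longrightarrow> (\<exists>q1'. (q1, a, q1') \<in> D1 \<and> (q1', q2') \<in> R)))"

definition chart_bisim :: "('q1, 'a, 'v) chart \<Rightarrow> ('q2, 'a, 'v) chart \<Rightarrow> bool" where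
  "chart_bisim C1 C2 = (case C1 of (Q1, s1, D1, E1) \<Rightarrow> case C2 of (Q2, s2, D2, E2) \<Rightarrow>
     (\<exists>R. is_bisim Q1 D1 E1 Q2 D2 E2 R \<and> (s1, s2) \<in> R))"

fun sbisim :: "nat \<Rightarrow> ('q1 \<times> 'a \<times> 'q1) set \<Rightarrow> ('q1 \<times> 'v) set \<Rightarrow>
   ('q2 \<times> 'a \<times> 'q2) set \<Rightarrow> ('q2 \<times> 'v) set \<Rightarrow> 'q1 \<Rightarrow> 'q2 \<Rightarrow> bool" where
  "sbisim 0 D1 E1 D2 E2 q1 q2 = True"
| "sbisim (Suc n) D1 E1 D2 E2 q1 q2 = (outs E1 q1 = outs E2 q2 \<and>
     (\<forall>a q1'. (q1, a, q1') \<in> D1 \<longrightarrow> (\<exists>q2'. (q2, a, q2') \<in> D2 \<and> sbisim n D1 E1 D2 E2 q1' q2')) \<and>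
     (\<forall>a q2'. (q2, a, q2') \<in> D2 \<longrightarrow> (\<exists>q1'. (q1, a, q1') \<in> D1 \<and> sbisim n D1 E1 D2 E2 q1' q2')))"

text \<open>Every finite chart is isomorphic to one whose states are natural numbers, so
  \<Omega> (finite charts modulo bisimilarity) is represented by classes of nat-state charts.\<close>

type_synonym ('a, 'v) omega = "(nat, 'a, 'v) chart set"

definition cls :: "('q, 'a, 'v) chart \<Rightarrow> ('a, 'v) omega" where
  "cls C = {C' :: (nat, 'a, 'v) chart. finite_chart C' \<and> chart_bisim C' C}"

definition Omega :: "('a, 'v) omega set" where
  "Omega = {cls C | C :: (nat, 'a, 'v) chart. finite_chart C}"

definition om_trans :: "('a, 'v) omega \<Rightarrow> 'a \<Rightarrow> ('a, 'v) omega \<Rightarrow> bool" where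
  "om_trans w a w' \<longleftrightarrow> (\<exists>Q s D E s'. (Q, s, D, E) \<in> w \<and> (s, a, s') \<in> D \<and> w' = cls (Q, s', D, E))"

definition om_out :: "('a, 'v) omega \<Rightarrow> 'v \<Rightarrow> bool" where
  "om_out w v \<longleftrightarrow> (\<exists>Q s D E. (Q, s, D, E) \<in> w \<and> (s, v) \<in> E)"

definition om_beta :: "('a, 'v) omega \<Rightarrow> (('a \<times> ('a, 'v) omega) + 'v) set" where
  "om_beta w = {Inl (a, w') | a w'. om_trans w a w'} \<union> {Inr v | v. om_out w v}"

definition pseudometric_on :: "'x set \<Rightarrow> ('x \<Rightarrow> 'x \<Rightarrow> real) \<Rightarrow> bool" where
  "pseudometric_on X d \<longleftrightarrow>
     (\<forall>x\<in>X. \<forall>y\<in>X. 0 \<le> d x y \<and> d x y \<le> 1) \<and>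
     (\<forall>x\<in>X. d x x = 0) \<and>
     (\<forall>x\<in>X. \<forall>y\<in>X. d x y = d y x) \<and>
     (\<forall>x\<in>X. \<forall>y\<in>X. \<forall>z\<in>X. d x z \<le> d x y + d y z)"

text \<open>D_X: 1-bounded pseudometrics on X, represented extensionally (value 0 outside X).\<close>
definition DX :: "'x set \<Rightarrow> ('x \<Rightarrow> 'x \<Rightarrow> real) set" where
  "DX X = {d. pseudometric_on X d \<and> (\<forall>x y. x \<notin> X \<or> y \<notin> X \<longrightarrow> d x y = 0)}"

definition lift :: "('x \<Rightarrow> 'x \<Rightarrow> real) \<Rightarrow> (('a \<times> 'x) + 'v) \<Rightarrow> (('a \<times> 'x) + 'v) \<Rightarrow> real" where
  "lift d m n = (case (m, n) of
      (Inl (a, x), Inl (b, y)) \<Rightarrow> if a = b then d x y / 2 else 1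
    | _ \<Rightarrow> if m = n then 0 else 1)"

definition supr :: "real set \<Rightarrow> real" where
  "supr S = (if S = {} then 0 else Max S)"

definition infr :: "real set \<Rightarrow> real" where
  "infr S = (if S = {} then 1 else Min S)"

definition hausdorff :: "('y \<Rightarrow> 'y \<Rightarrow> real) \<Rightarrow> 'y set \<Rightarrow> 'y set \<Rightarrow> real" where
  "hausdorff d A B = max (supr ((\<lambda>x. infr ((\<lambda>y. d x y) ` B)) ` A))
                         (supr ((\<lambda>y. infr ((\<lambda>x. d y x) ` A)) ` B))"

definition Phi :: "'x set \<Rightarrow> ('x \<Rightarrow> (('a \<times> 'x) + 'v) set) \<Rightarrow> ('x \<Rightarrow> 'x \<Rightarrow> real) \<Rightarrow> ('x \<Rightarrow> 'x \<Rightarrow> real)" where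
  "Phi X beta d = (\<lambda>q1 q2. if q1 \<in> X \<and> q2 \<in> X then hausdorff (lift d) (beta q1) (beta q2) else 0)"

definition bd_of :: "'x set \<Rightarrow> ('x \<Rightarrow> (('a \<times> 'x) + 'v) set) \<Rightarrow> ('x \<Rightarrow> 'x \<Rightarrow> real)" where
  "bd_of X beta = (THE d. d \<in> DX X \<and> Phi X beta d = d \<and>
      (\<forall>d' \<in> DX X. Phi X beta d' = d' \<longrightarrow> (\<forall>x y. d x y \<le> d' x y)))"

definition bd :: "('a, 'v) omega \<Rightarrow> ('a, 'v) omega \<Rightarrow> real" where
  "bd = bd_of Omega om_beta"

end

theory Submission
  imports Defs
begin


lemma chart_bisim_tup: "chart_bisim (Q1,s1,D1,E1) (Q2,s2,D2,E2) \<longleftrightarrow> (\<exists>R. is_bisim Q1 D1 E1 Q2 D2 E2 R \<and> (s1,s2) \<in> R)"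
  by (simp add: chart_bisim_def)

lemma is_bisim_comp:
  assumes "is_bisim Q1 D1 E1 Q2 D2 E2 R" "is_bisim Q2 D2 E2 Q3 D3 E3 S"
  shows "is_bisim Q1 D1 E1 Q3 D3 E3 (R O S)"
proof -
  have a: "R \<subseteq> Q1 \<times> Q2" "S \<subseteq> Q2 \<times> Q3" using assms unfolding is_bisim_def by auto
  show ?thesis unfolding is_bisim_def
  proof (intro conjI ballI)
    show "R O S \<subseteq> Q1 \<times> Q3" using a by blast
  next
    fix x assume "x \<in> R O S"
    then obtain p q r where x: "x = (p,r)" "(p,q) \<in> R" "(q,r) \<in> S" by blast
    have r: "outs E1 p = outs E2 q \<and>
        (\<forall>a q1'. (p, a, q1') \<in> D1 \<longrightarrow> (\<exists>q2'. (q, a, q2') \<in> D2 \<and> (q1', q2') \<in> R)) \<and>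
        (\<forall>a q2'. (q, a, q2') \<in> D2 \<longrightarrow> (\<exists>q1'. (p, a, q1') \<in> D1 \<and> (q1', q2') \<in> R))"
      using assms(1) x(2) unfolding is_bisim_def by fast
    have s: "outs E2 q = outs E3 r \<and>
        (\<forall>a q1'. (q, a, q1') \<in> D2 \<longrightarrow> (\<exists>q2'. (r, a, q2') \<in> D3 \<and> (q1', q2') \<in> S)) \<and>
        (\<forall>a q2'. (r, a, q2') \<in> D3 \<longrightarrow> (\<exists>q1'. (q, a, q1') \<in> D2 \<and> (q1', q2') \<in> S))"
      using assms(2) x(3) unfolding is_bisim_def by fast
    show "case x of (q1, q2) \<Rightarrow> outs E1 q1 = outs E3 q2 \<and>
         (\<forall>a q1'. (q1, a, q1') \<in> D1 \<longrightarrow> (\<exists>q2'. (q2, a, q2') \<in> D3 \<and> (q1', q2') \<in> R O S)) \<and>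
         (\<forall>a q2'. (q2, a, q2') \<in> D3 \<longrightarrow> (\<exists>q1'. (q1, a, q1') \<in> D1 \<and> (q1', q2') \<in> R O S))"
      unfolding x(1) using r s by (simp; meson relcomp.relcompI)
  qed
qed

lemma is_bisim_conv:
  assumes "is_bisim Q1 D1 E1 Q2 D2 E2 R"
  shows "is_bisim Q2 D2 E2 Q1 D1 E1 (R\<inverse>)"
  using assms unfolding is_bisim_def by fastforce

lemma chart_bisim_trans:
  "chart_bisim A B \<Longrightarrow> chart_bisim B C \<Longrightarrow> chart_bisim A C"
  apply (cases A; cases B; cases C)
  apply (simp add: chart_bisim_tup)
  apply (meson is_bisim_comp relcomp.relcompI)
  done

lemma chart_bisim_sym:
  "chart_bisim A B \<Longrightarrow> chart_bisim B A"
  apply (cases A; cases B)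
  apply (simp add: chart_bisim_tup)
  apply (meson is_bisim_conv converse_iff)
  done

lemma cls_eq: "chart_bisim C1 C2 \<Longrightarrow> cls C1 = cls C2"
  unfolding cls_def by (meson chart_bisim_trans chart_bisim_sym)

lemma finite_chart_tup: "finite_chart (Q,s,D,E) \<longleftrightarrow> finite Q \<and> s \<in> Q \<and> D \<subseteq> Q \<times> UNIV \<times> Q \<and> E \<subseteq> Q \<times> UNIV \<and> finite D \<and> finite E"
  by (simp add: finite_chart_def)

lemma nat_rep:
  fixes C :: "('q,'a,'v) chart"
  assumes "finite_chart C"
  shows "\<exists>C' :: (nat,'a,'v) chart. finite_chart C' \<and> chart_bisim C' C"
proof -
  obtain Q s D E where C: "C = (Q,s,D,E)" by (cases C) auto
  have fc: "finite Q" "s \<in> Q" "D \<subseteq> Q \<times> UNIV \<times> Q" "E \<subseteq> Q \<times> UNIV" "finite D" "finite E"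
    using assms C by (auto simp: finite_chart_tup)
  obtain f :: "'q \<Rightarrow> nat" where inj: "inj_on f Q"
    using finite_imp_inj_to_nat_seg[OF fc(1)] by blast
  define D' where "D' = (\<lambda>(p,a,q). (f p, a, f q)) ` D"
  define E' where "E' = (\<lambda>(p,v). (f p, v)) ` E"
  define R where "R = (\<lambda>q. (f q, q)) ` Q"
  have "finite_chart (f ` Q, f s, D', E')"
    using fc unfolding finite_chart_tup D'_def E'_def by auto
  moreover have "is_bisim (f ` Q) D' E' Q D E R"
    unfolding is_bisim_def
  proof (intro conjI ballI)
    show "R \<subseteq> f ` Q \<times> Q" unfolding R_def by auto
  next
    fix x assume "x \<in> R"
    then obtain q where x: "x = (f q, q)" "q \<in> Q" unfolding R_def by auto
    have o: "outs E' (f q) = outs E q"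
      unfolding outs_def E'_def using fc(4) inj x(2) by (auto simp: inj_on_def)
    have t1: "\<forall>a q1'. (f q, a, q1') \<in> D' \<longrightarrow> (\<exists>q2'. (q, a, q2') \<in> D \<and> (q1', q2') \<in> R)"
    proof (intro allI impI)
      fix a q1' assume "(f q, a, q1') \<in> D'"
      then obtain p q2 where "(p,a,q2) \<in> D" "f p = f q" "q1' = f q2" unfolding D'_def by auto
      moreover then have "p = q" "q2 \<in> Q" using inj x(2) fc(3) by (auto simp: inj_on_def)
      ultimately show "\<exists>q2'. (q, a, q2') \<in> D \<and> (q1', q2') \<in> R" unfolding R_def by auto
    qed
    have t2: "\<forall>a q2'. (q, a, q2') \<in> D \<longrightarrow> (\<exists>q1'. (f q, a, q1') \<in> D' \<and> (q1', q2') \<in> R)"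
      unfolding D'_def R_def using fc(3) by force
    show "case x of (q1, q2) \<Rightarrow> outs E' q1 = outs E q2 \<and>
         (\<forall>a q1'. (q1, a, q1') \<in> D' \<longrightarrow> (\<exists>q2'. (q2, a, q2') \<in> D \<and> (q1', q2') \<in> R)) \<and>
         (\<forall>a q2'. (q2, a, q2') \<in> D \<longrightarrow> (\<exists>q1'. (q1, a, q1') \<in> D' \<and> (q1', q2') \<in> R))"
      using o t1 t2 x by simp
  qed
  moreover have "(f s, s) \<in> R" unfolding R_def using fc by auto
  ultimately have "finite_chart (f ` Q, f s, D', E') \<and> chart_bisim (f ` Q, f s, D', E') C"
    unfolding C chart_bisim_tup by blast
  then show ?thesis by blast
qed



lemma cls_mem: "C' \<in> cls C \<longleftrightarrow> finite_chart C' \<and> chart_bisim C' C"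
  by (simp add: cls_def)

lemma trans_cls:
  fixes Q :: "'q set" and D :: "('q \<times> 'a \<times> 'q) set" and E :: "('q \<times> 'v) set"
  assumes "finite_chart (Q,s,D,E)"
  shows "om_trans (cls (Q,s,D,E)) a w' \<longleftrightarrow> (\<exists>s'. (s,a,s') \<in> D \<and> w' = cls (Q,s',D,E))"
proof
  assume "om_trans (cls (Q,s,D,E)) a w'"
  then obtain Q' t D' E' t' where m: "(Q',t,D',E') \<in> cls (Q,s,D,E)" "(t,a,t') \<in> D'" "w' = cls (Q',t',D',E')"
    unfolding om_trans_def by blast
  then obtain R where R: "is_bisim Q' D' E' Q D E R" "(t,s) \<in> R"
    by (auto simp: cls_mem chart_bisim_tup)
  then obtain s' where "(s,a,s') \<in> D" "(t',s') \<in> R" using m(2) unfolding is_bisim_def by fast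
  moreover have "cls (Q',t',D',E') = cls (Q,s',D,E)"
    using R calculation by (intro cls_eq) (auto simp: chart_bisim_tup)
  ultimately show "\<exists>s'. (s,a,s') \<in> D \<and> w' = cls (Q,s',D,E)" using m by blast
next
  assume "\<exists>s'. (s,a,s') \<in> D \<and> w' = cls (Q,s',D,E)"
  then obtain s' where s': "(s,a,s') \<in> D" "w' = cls (Q,s',D,E)" by blast
  obtain C' :: "(nat,'a,'v) chart" where "finite_chart C'" "chart_bisim C' (Q,s,D,E)"
    using nat_rep[OF assms] by blast
  moreover obtain Q' t D' E' where C': "C' = (Q',t,D',E')" by (cases C') auto
  ultimately have m: "(Q',t,D',E') \<in> cls (Q,s,D,E)" by (simp add: cls_mem)
  then obtain R where R: "is_bisim Q' D' E' Q D E R" "(t,s) \<in> R"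
    by (auto simp: cls_mem chart_bisim_tup)
  then obtain t' where t': "(t,a,t') \<in> D'" "(t',s') \<in> R" using s'(1) unfolding is_bisim_def by fast
  have "cls (Q',t',D',E') = cls (Q,s',D,E)"
    using R t' by (intro cls_eq) (auto simp: chart_bisim_tup)
  then show "om_trans (cls (Q,s,D,E)) a w'" unfolding om_trans_def using m t' s' by metis
qed

lemma out_cls:
  fixes Q :: "'q set" and D :: "('q \<times> 'a \<times> 'q) set" and E :: "('q \<times> 'v) set"
  assumes "finite_chart (Q,s,D,E)"
  shows "om_out (cls (Q,s,D,E)) v \<longleftrightarrow> (s,v) \<in> E"
proof
  assume "om_out (cls (Q,s,D,E)) v"
  then obtain Q' t D' E' where m: "(Q',t,D',E') \<in> cls (Q,s,D,E)" "(t,v) \<in> E'"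
    unfolding om_out_def by blast
  then obtain R where R: "is_bisim Q' D' E' Q D E R" "(t,s) \<in> R"
    by (auto simp: cls_mem chart_bisim_tup)
  then have "outs E' t = outs E s" unfolding is_bisim_def by fast
  then show "(s,v) \<in> E" using m(2) by (auto simp: outs_def)
next
  assume v: "(s,v) \<in> E"
  obtain C' :: "(nat,'a,'v) chart" where "finite_chart C'" "chart_bisim C' (Q,s,D,E)"
    using nat_rep[OF assms] by blast
  moreover obtain Q' t D' E' where C': "C' = (Q',t,D',E')" by (cases C') auto
  ultimately have m: "(Q',t,D',E') \<in> cls (Q,s,D,E)" by (simp add: cls_mem)
  then obtain R where R: "is_bisim Q' D' E' Q D E R" "(t,s) \<in> R"
    by (auto simp: cls_mem chart_bisim_tup)
  then have "outs E' t = outs E s" unfolding is_bisim_def by fast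
  then have "(t,v) \<in> E'" using v by (auto simp: outs_def)
  then show "om_out (cls (Q,s,D,E)) v" unfolding om_out_def using m by blast
qed

lemma succ_fin: "finite_chart (Q,s,D,E) \<Longrightarrow> (s,a,s') \<in> D \<Longrightarrow> finite_chart (Q,s',D,E)"
  by (auto simp: finite_chart_tup)

lemma cls_in_Omega:
  fixes C :: "('q,'a,'v) chart"
  assumes "finite_chart C" shows "cls C \<in> Omega"
proof -
  obtain C' :: "(nat,'a,'v) chart" where "finite_chart C'" "chart_bisim C' C"
    using nat_rep[OF assms] by blast
  then show ?thesis unfolding Omega_def using cls_eq by blast
qed

lemma Omega_E:
  assumes "w \<in> Omega"
  obtains Q s D E where "finite_chart (Q::nat set,s,D,E)" "w = cls (Q,s,D,E)"
proof -
  obtain C :: "(nat,'a,'b) chart" where C: "finite_chart C" "w = cls C"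
    using assms unfolding Omega_def by blast
  obtain Q s D E where "C = (Q,s,D,E)" by (cases C) auto
  then show ?thesis using that C by blast
qed

lemma Omega_trans: "w \<in> Omega \<Longrightarrow> om_trans w a w' \<Longrightarrow> w' \<in> Omega"
proof -
  assume w: "w \<in> Omega" and t: "om_trans w a w'"
  obtain Q s D E where fc: "finite_chart (Q::nat set,s,D,E)" and e: "w = cls (Q,s,D,E)"
    using Omega_E[OF w] by blast
  obtain s' where "(s,a,s') \<in> D" "w' = cls (Q,s',D,E)" using t trans_cls[OF fc] e by blast
  then show ?thesis using succ_fin[OF fc] cls_in_Omega by blast
qed

lemma beta_Inl[simp]: "Inl (a,w') \<in> om_beta w \<longleftrightarrow> om_trans w a w'"
  by (auto simp: om_beta_def)
lemma beta_Inr[simp]: "Inr v \<in> om_beta w \<longleftrightarrow> om_out w v"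
  by (auto simp: om_beta_def)

lemma beta_finite:
  assumes "w \<in> Omega" shows "finite (om_beta w)"
proof -
  obtain Q s D E where fc: "finite_chart (Q::nat set,s,D,E)" and w: "w = cls (Q,s,D,E)"
    using Omega_E[OF assms] by blast
  have fD: "finite D" "finite E" using fc by (auto simp: finite_chart_tup)
  have "om_beta w \<subseteq> (\<lambda>(p,a,q). Inl (a, cls (Q,q,D,E))) ` D \<union> (\<lambda>(p,v). Inr v) ` E"
  proof
    fix e assume e: "e \<in> om_beta w"
    show "e \<in> (\<lambda>(p,a,q). Inl (a, cls (Q,q,D,E))) ` D \<union> (\<lambda>(p,v). Inr v) ` E"
    proof (cases e)
      case (Inl x)
      then obtain a w' where "e = Inl (a,w')" by (cases x) auto
      then have "om_trans (cls (Q,s,D,E)) a w'" using e w by simp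
      then obtain s' where "(s,a,s') \<in> D" "w' = cls (Q,s',D,E)" using trans_cls[OF fc] by blast
      then have "e \<in> (\<lambda>(p,a,q). Inl (a, cls (Q,q,D,E))) ` D" using \<open>e = Inl (a,w')\<close> by force
      then show ?thesis by blast
    next
      case (Inr v)
      then have "(s,v) \<in> E" using e w out_cls[OF fc] by simp
      then have "e \<in> (\<lambda>(p,v). Inr v) ` E" using Inr by force
      then show ?thesis by blast
    qed
  qed
  then show ?thesis using fD by (meson finite_Un finite_imageI finite_subset)
qed

lemma sbisim_mono: "sbisim (Suc n) D1 E1 D2 E2 q1 q2 \<Longrightarrow> sbisim n D1 E1 D2 E2 q1 q2"
proof (induction n arbitrary: q1 q2)
  case 0 then show ?case by simp
next
  case (Suc n)
  have h: "outs E1 q1 = outs E2 q2 \<and>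
     (\<forall>a q1'. (q1, a, q1') \<in> D1 \<longrightarrow> (\<exists>q2'. (q2, a, q2') \<in> D2 \<and> sbisim (Suc n) D1 E1 D2 E2 q1' q2')) \<and>
     (\<forall>a q2'. (q2, a, q2') \<in> D2 \<longrightarrow> (\<exists>q1'. (q1, a, q1') \<in> D1 \<and> sbisim (Suc n) D1 E1 D2 E2 q1' q2'))"
    by (rule iffD1[OF sbisim.simps(2)]) (rule Suc.prems)
  show ?case by (rule iffD2[OF sbisim.simps(2)]) (use h Suc.IH in blast)
qed

lemma sbisim_mono_le: "n \<le> m \<Longrightarrow> sbisim m D1 E1 D2 E2 q1 q2 \<Longrightarrow> sbisim n D1 E1 D2 E2 q1 q2"
proof (induction m)
  case 0 then show ?case by simp
next
  case (Suc m)
  show ?case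
  proof (cases "n = Suc m")
    case True then show ?thesis using Suc.prems by simp
  next
    case False
    then have "n \<le> m" using Suc.prems(1) by simp
    moreover have "sbisim m D1 E1 D2 E2 q1 q2" using Suc.prems(2) by (rule sbisim_mono)
    ultimately show ?thesis by (rule Suc.IH)
  qed
qed



lemma finite_bound:
  fixes P :: "nat \<Rightarrow> 'b \<Rightarrow> bool"
  assumes "finite S" "\<forall>x\<in>S. \<exists>n. \<not> P n x" "\<And>m n x. n \<le> m \<Longrightarrow> P m x \<Longrightarrow> P n x"
  shows "\<exists>N. \<forall>x\<in>S. \<not> P N x"
  using assms(1,2)
proof (induction S rule: finite_induct)
  case empty then show ?case by simp
next
  case (insert y S)
  then obtain N where N: "\<forall>x\<in>S. \<not> P N x" by auto
  obtain k where k: "\<not> P k y" using insert by auto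
  have "\<forall>x\<in>insert y S. \<not> P (max N k) x"
  proof
    fix x assume "x \<in> insert y S"
    then consider "x = y" | "x \<in> S" by blast
    then show "\<not> P (max N k) x"
    proof cases
      case 1
      have "k \<le> max N k" by simp
      then show ?thesis using 1 k assms(3) by blast
    next
      case 2
      have "N \<le> max N k" by simp
      then show ?thesis using 2 N assms(3) by blast
    qed
  qed
  then show ?case by blast
qed

lemma all_sbisim_bisim:
  fixes Q1 :: "'q1 set" and D1 :: "('q1 \<times> 'a \<times> 'q1) set" and E1 :: "('q1 \<times> 'v) set"
    and Q2 :: "'q2 set" and D2 :: "('q2 \<times> 'a \<times> 'q2) set" and E2 :: "('q2 \<times> 'v) set"
  assumes f1: "finite_chart (Q1,s1,D1,E1)" and f2: "finite_chart (Q2,s2,D2,E2)"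
    and all: "\<forall>n. sbisim n D1 E1 D2 E2 s1 s2"
  shows "chart_bisim (Q1,s1,D1,E1) (Q2,s2,D2,E2)"
proof -
  have c1: "D1 \<subseteq> Q1 \<times> UNIV \<times> Q1" "finite D1" "s1 \<in> Q1" using f1 by (auto simp: finite_chart_tup)
  have c2: "D2 \<subseteq> Q2 \<times> UNIV \<times> Q2" "finite D2" "s2 \<in> Q2" using f2 by (auto simp: finite_chart_tup)
  define R where "R = {(q1,q2). q1 \<in> Q1 \<and> q2 \<in> Q2 \<and> (\<forall>n. sbisim n D1 E1 D2 E2 q1 q2)}"
  have mono: "\<And>m n x y. n \<le> m \<Longrightarrow> sbisim m D1 E1 D2 E2 x y \<Longrightarrow> sbisim n D1 E1 D2 E2 x y"
    by (rule sbisim_mono_le)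
  have "is_bisim Q1 D1 E1 Q2 D2 E2 R"
    unfolding is_bisim_def
  proof (intro conjI ballI)
    show "R \<subseteq> Q1 \<times> Q2" unfolding R_def by auto
  next
    fix x assume "x \<in> R"
    then obtain q1 q2 where x: "x = (q1,q2)" "q1 \<in> Q1" "q2 \<in> Q2" "\<forall>n. sbisim n D1 E1 D2 E2 q1 q2"
      unfolding R_def by auto
    have "sbisim (Suc 0) D1 E1 D2 E2 q1 q2" using x(4) by blast
    then have o: "outs E1 q1 = outs E2 q2" by (rule conjunct1[OF iffD1[OF sbisim.simps(2)]])
    have t1: "\<forall>a q1'. (q1, a, q1') \<in> D1 \<longrightarrow> (\<exists>q2'. (q2, a, q2') \<in> D2 \<and> (q1', q2') \<in> R)"
    proof (intro allI impI, rule ccontr)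
      fix a q1' assume tr: "(q1, a, q1') \<in> D1" and no: "\<not> (\<exists>q2'. (q2, a, q2') \<in> D2 \<and> (q1', q2') \<in> R)"
      define S where "S = {q2'. (q2, a, q2') \<in> D2}"
      have fS: "finite S" unfolding S_def
        by (rule finite_subset[of _ "(\<lambda>(p,b,q). q) ` D2"]) (use c2 in force)+
      have "\<forall>y\<in>S. \<exists>n. \<not> sbisim n D1 E1 D2 E2 q1' y"
      proof
        fix y assume "y \<in> S"
        then have y: "(q2, a, y) \<in> D2" unfolding S_def by simp
        have "q1' \<in> Q1" using tr c1(1) by blast
        moreover have "y \<in> Q2" using y c2(1) by blast
        ultimately show "\<exists>n. \<not> sbisim n D1 E1 D2 E2 q1' y"
          using no y unfolding R_def by blast
      qed
      moreover have "\<And>m n y. n \<le> m \<Longrightarrow> sbisim m D1 E1 D2 E2 q1' y \<Longrightarrow> sbisim n D1 E1 D2 E2 q1' y"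
        by (rule mono)
      ultimately obtain N where N: "\<forall>y\<in>S. \<not> sbisim N D1 E1 D2 E2 q1' y"
        using finite_bound[of S "\<lambda>n y. sbisim n D1 E1 D2 E2 q1' y", OF fS] by blast
      have "sbisim (Suc N) D1 E1 D2 E2 q1 q2" using x(4) by blast
      then have "\<forall>a q1'. (q1, a, q1') \<in> D1 \<longrightarrow> (\<exists>q2'. (q2, a, q2') \<in> D2 \<and> sbisim N D1 E1 D2 E2 q1' q2')"
        by (rule conjunct1[OF conjunct2[OF iffD1[OF sbisim.simps(2)]]])
      then obtain y where "(q2,a,y) \<in> D2" "sbisim N D1 E1 D2 E2 q1' y" using tr by blast
      then show False using N unfolding S_def by blast
    qed
    have t2: "\<forall>a q2'. (q2, a, q2') \<in> D2 \<longrightarrow> (\<exists>q1'. (q1, a, q1') \<in> D1 \<and> (q1', q2') \<in> R)"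
    proof (intro allI impI, rule ccontr)
      fix a q2' assume tr: "(q2, a, q2') \<in> D2" and no: "\<not> (\<exists>q1'. (q1, a, q1') \<in> D1 \<and> (q1', q2') \<in> R)"
      define S where "S = {q1'. (q1, a, q1') \<in> D1}"
      have fS: "finite S" unfolding S_def
        by (rule finite_subset[of _ "(\<lambda>(p,b,q). q) ` D1"]) (use c1 in force)+
      have "\<forall>y\<in>S. \<exists>n. \<not> sbisim n D1 E1 D2 E2 y q2'"
      proof
        fix y assume "y \<in> S"
        then have y: "(q1, a, y) \<in> D1" unfolding S_def by simp
        have "q2' \<in> Q2" using tr c2(1) by blast
        moreover have "y \<in> Q1" using y c1(1) by blast
        ultimately show "\<exists>n. \<not> sbisim n D1 E1 D2 E2 y q2'"
          using no y unfolding R_def by blast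
      qed
      moreover have "\<And>m n y. n \<le> m \<Longrightarrow> sbisim m D1 E1 D2 E2 y q2' \<Longrightarrow> sbisim n D1 E1 D2 E2 y q2'"
        by (rule mono)
      ultimately obtain N where N: "\<forall>y\<in>S. \<not> sbisim N D1 E1 D2 E2 y q2'"
        using finite_bound[of S "\<lambda>n y. sbisim n D1 E1 D2 E2 y q2'", OF fS] by blast
      have "sbisim (Suc N) D1 E1 D2 E2 q1 q2" using x(4) by blast
      then have "\<forall>a q2'. (q2, a, q2') \<in> D2 \<longrightarrow> (\<exists>q1'. (q1, a, q1') \<in> D1 \<and> sbisim N D1 E1 D2 E2 q1' q2')"
        by (rule conjunct2[OF conjunct2[OF iffD1[OF sbisim.simps(2)]]])
      then obtain y where "(q1,a,y) \<in> D1" "sbisim N D1 E1 D2 E2 y q2'" using tr by blast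
      then show False using N unfolding S_def by blast
    qed
    show "case x of (q1, q2) \<Rightarrow> outs E1 q1 = outs E2 q2 \<and>
         (\<forall>a q1'. (q1, a, q1') \<in> D1 \<longrightarrow> (\<exists>q2'. (q2, a, q2') \<in> D2 \<and> (q1', q2') \<in> R)) \<and>
         (\<forall>a q2'. (q2, a, q2') \<in> D2 \<longrightarrow> (\<exists>q1'. (q1, a, q1') \<in> D1 \<and> (q1', q2') \<in> R))"
      using x(1) o t1 t2 by simp
  qed
  moreover have "(s1,s2) \<in> R" unfolding R_def using c1 c2 all by auto
  ultimately show ?thesis unfolding chart_bisim_tup by blast
qed

fun oeq :: "nat \<Rightarrow> ('a,'v) omega \<Rightarrow> ('a,'v) omega \<Rightarrow> bool" where
  "oeq 0 x y = True"
| "oeq (Suc n) x y = ((\<forall>v. om_out x v \<longleftrightarrow> om_out y v) \<and>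
     (\<forall>a x'. om_trans x a x' \<longrightarrow> (\<exists>y'. om_trans y a y' \<and> oeq n x' y')) \<and>
     (\<forall>a y'. om_trans y a y' \<longrightarrow> (\<exists>x'. om_trans x a x' \<and> oeq n x' y')))"

lemma oeq_refl: "oeq n x x"
  by (induction n arbitrary: x) auto

lemma oeq_sym: "oeq n x y \<Longrightarrow> oeq n y x"
proof (induction n arbitrary: x y)
  case 0 then show ?case by simp
next
  case (Suc n)
  have h: "(\<forall>v. om_out x v \<longleftrightarrow> om_out y v) \<and>
     (\<forall>a x'. om_trans x a x' \<longrightarrow> (\<exists>y'. om_trans y a y' \<and> oeq n x' y')) \<and>
     (\<forall>a y'. om_trans y a y' \<longrightarrow> (\<exists>x'. om_trans x a x' \<and> oeq n x' y'))"
    by (rule iffD1[OF oeq.simps(2)]) (rule Suc.prems)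
  show ?case by (rule iffD2[OF oeq.simps(2)]) (use h Suc.IH in blast)
qed

lemma oeq_trans: "oeq n x y \<Longrightarrow> oeq n y z \<Longrightarrow> oeq n x z"
proof (induction n arbitrary: x y z)
  case 0 then show ?case by simp
next
  case (Suc n)
  have h: "(\<forall>v. om_out x v \<longleftrightarrow> om_out y v) \<and>
     (\<forall>a x'. om_trans x a x' \<longrightarrow> (\<exists>y'. om_trans y a y' \<and> oeq n x' y')) \<and>
     (\<forall>a y'. om_trans y a y' \<longrightarrow> (\<exists>x'. om_trans x a x' \<and> oeq n x' y'))"
    by (rule iffD1[OF oeq.simps(2)]) (rule Suc.prems(1))
  have h2: "(\<forall>v. om_out y v \<longleftrightarrow> om_out z v) \<and>
     (\<forall>a x'. om_trans y a x' \<longrightarrow> (\<exists>y'. om_trans z a y' \<and> oeq n x' y')) \<and>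
     (\<forall>a y'. om_trans z a y' \<longrightarrow> (\<exists>x'. om_trans y a x' \<and> oeq n x' y'))"
    by (rule iffD1[OF oeq.simps(2)]) (rule Suc.prems(2))
  have o: "\<forall>v. om_out x v \<longleftrightarrow> om_out z v" using h h2 by blast
  have t1: "\<forall>a x'. om_trans x a x' \<longrightarrow> (\<exists>z'. om_trans z a z' \<and> oeq n x' z')"
  proof (intro allI impI)
    fix a x' assume "om_trans x a x'"
    then obtain y' where y': "om_trans y a y'" "oeq n x' y'" using h by blast
    then obtain z' where z': "om_trans z a z'" "oeq n y' z'" using h2 by blast
    have "oeq n x' z'" using y'(2) z'(2) by (rule Suc.IH)
    then show "\<exists>z'. om_trans z a z' \<and> oeq n x' z'" using z'(1) by blast
  qed
  have t2: "\<forall>a z'. om_trans z a z' \<longrightarrow> (\<exists>x'. om_trans x a x' \<and> oeq n x' z')"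
  proof (intro allI impI)
    fix a z' assume "om_trans z a z'"
    then obtain y' where y': "om_trans y a y'" "oeq n y' z'" using h2 by blast
    then obtain x' where x': "om_trans x a x'" "oeq n x' y'" using h by blast
    have "oeq n x' z'" using x'(2) y'(2) by (rule Suc.IH)
    then show "\<exists>x'. om_trans x a x' \<and> oeq n x' z'" using x'(1) by blast
  qed
  show ?case by (rule iffD2[OF oeq.simps(2)]) (use o t1 t2 in blast)
qed

lemma oeq_mono: "oeq (Suc n) x y \<Longrightarrow> oeq n x y"
proof (induction n arbitrary: x y)
  case 0 then show ?case by simp
next
  case (Suc n)
  have h: "(\<forall>v. om_out x v \<longleftrightarrow> om_out y v) \<and>
     (\<forall>a x'. om_trans x a x' \<longrightarrow> (\<exists>y'. om_trans y a y' \<and> oeq (Suc n) x' y')) \<and>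
     (\<forall>a y'. om_trans y a y' \<longrightarrow> (\<exists>x'. om_trans x a x' \<and> oeq (Suc n) x' y'))"
    by (rule iffD1[OF oeq.simps(2)]) (rule Suc.prems)
  show ?case by (rule iffD2[OF oeq.simps(2)]) (use h Suc.IH in blast)
qed

lemma oeq_mono_le: "n \<le> m \<Longrightarrow> oeq m x y \<Longrightarrow> oeq n x y"
proof (induction m)
  case 0 then show ?case by simp
next
  case (Suc m)
  show ?case
  proof (cases "n = Suc m")
    case True then show ?thesis using Suc.prems by simp
  next
    case False
    then have "n \<le> m" using Suc.prems(1) by simp
    moreover have "oeq m x y" using Suc.prems(2) by (rule oeq_mono)
    ultimately show ?thesis by (rule Suc.IH)
  qed
qed

lemma oeq_sbisim:
  fixes Q1 :: "'q1 set" and D1 :: "('q1 \<times> 'a \<times> 'q1) set" and E1 :: "('q1 \<times> 'v) set"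
    and Q2 :: "'q2 set" and D2 :: "('q2 \<times> 'a \<times> 'q2) set" and E2 :: "('q2 \<times> 'v) set"
  assumes "finite_chart (Q1,s1,D1,E1)" and "finite_chart (Q2,s2,D2,E2)"
  shows "oeq n (cls (Q1,s1,D1,E1)) (cls (Q2,s2,D2,E2)) \<longleftrightarrow> sbisim n D1 E1 D2 E2 s1 s2"
  using assms
proof (induction n arbitrary: s1 s2)
  case 0 then show ?case by simp
next
  case (Suc n)
  note f1 = Suc.prems(1) and f2 = Suc.prems(2)
  have o: "(\<forall>v. om_out (cls (Q1,s1,D1,E1)) v \<longleftrightarrow> om_out (cls (Q2,s2,D2,E2)) v) \<longleftrightarrow> outs E1 s1 = outs E2 s2"
  proof -
    have "\<And>v. om_out (cls (Q1,s1,D1,E1)) v \<longleftrightarrow> v \<in> outs E1 s1" using out_cls[OF f1] by (simp add: outs_def)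
    moreover have "\<And>v. om_out (cls (Q2,s2,D2,E2)) v \<longleftrightarrow> v \<in> outs E2 s2" using out_cls[OF f2] by (simp add: outs_def)
    ultimately show ?thesis by blast
  qed
  have IH': "\<And>a a' s1' s2'. (s1,a,s1') \<in> D1 \<Longrightarrow> (s2,a',s2') \<in> D2 \<Longrightarrow>
      oeq n (cls (Q1,s1',D1,E1)) (cls (Q2,s2',D2,E2)) \<longleftrightarrow> sbisim n D1 E1 D2 E2 s1' s2'"
  proof -
    fix a a' s1' s2' assume "(s1,a,s1') \<in> D1" "(s2,a',s2') \<in> D2"
    then have "finite_chart (Q1,s1',D1,E1)" "finite_chart (Q2,s2',D2,E2)"
      using succ_fin[OF f1] succ_fin[OF f2] by auto
    then show "oeq n (cls (Q1,s1',D1,E1)) (cls (Q2,s2',D2,E2)) \<longleftrightarrow> sbisim n D1 E1 D2 E2 s1' s2'"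
      by (rule Suc.IH)
  qed
  have t1: "(\<forall>a x'. om_trans (cls (Q1,s1,D1,E1)) a x' \<longrightarrow> (\<exists>y'. om_trans (cls (Q2,s2,D2,E2)) a y' \<and> oeq n x' y'))
     \<longleftrightarrow> (\<forall>a q1'. (s1, a, q1') \<in> D1 \<longrightarrow> (\<exists>q2'. (s2, a, q2') \<in> D2 \<and> sbisim n D1 E1 D2 E2 q1' q2'))"
  proof (intro iffI allI impI)
    fix a q1' assume h: "\<forall>a x'. om_trans (cls (Q1,s1,D1,E1)) a x' \<longrightarrow> (\<exists>y'. om_trans (cls (Q2,s2,D2,E2)) a y' \<and> oeq n x' y')"
      and tr: "(s1, a, q1') \<in> D1"
    have "om_trans (cls (Q1,s1,D1,E1)) a (cls (Q1,q1',D1,E1))" using tr unfolding trans_cls[OF f1] by blast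
    then obtain y' where y': "om_trans (cls (Q2,s2,D2,E2)) a y'" "oeq n (cls (Q1,q1',D1,E1)) y'" using h by blast
    then obtain q2' where q2'0: "(s2,a,q2') \<in> D2" "y' = cls (Q2,q2',D2,E2)"
      unfolding trans_cls[OF f2] by blast
    then have q2': "(s2,a,q2') \<in> D2" "oeq n (cls (Q1,q1',D1,E1)) (cls (Q2,q2',D2,E2))" using y' by simp_all
    then show "\<exists>q2'. (s2, a, q2') \<in> D2 \<and> sbisim n D1 E1 D2 E2 q1' q2'" using IH'[OF tr q2'(1)] by blast
  next
    fix a x' assume h: "\<forall>a q1'. (s1, a, q1') \<in> D1 \<longrightarrow> (\<exists>q2'. (s2, a, q2') \<in> D2 \<and> sbisim n D1 E1 D2 E2 q1' q2')"
      and tr: "om_trans (cls (Q1,s1,D1,E1)) a x'"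
    obtain q1' where q1': "(s1,a,q1') \<in> D1" "x' = cls (Q1,q1',D1,E1)" using tr unfolding trans_cls[OF f1] by blast
    then obtain q2' where q2': "(s2,a,q2') \<in> D2" "sbisim n D1 E1 D2 E2 q1' q2'" using h by blast
    have "om_trans (cls (Q2,s2,D2,E2)) a (cls (Q2,q2',D2,E2))" using q2' unfolding trans_cls[OF f2] by blast
    moreover have "oeq n x' (cls (Q2,q2',D2,E2))" using IH'[OF q1'(1) q2'(1)] q2'(2) q1'(2) by simp
    ultimately show "\<exists>y'. om_trans (cls (Q2,s2,D2,E2)) a y' \<and> oeq n x' y'" by blast
  qed
  have t2: "(\<forall>a y'. om_trans (cls (Q2,s2,D2,E2)) a y' \<longrightarrow> (\<exists>x'. om_trans (cls (Q1,s1,D1,E1)) a x' \<and> oeq n x' y'))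
     \<longleftrightarrow> (\<forall>a q2'. (s2, a, q2') \<in> D2 \<longrightarrow> (\<exists>q1'. (s1, a, q1') \<in> D1 \<and> sbisim n D1 E1 D2 E2 q1' q2'))"
  proof (intro iffI allI impI)
    fix a q2' assume h: "\<forall>a y'. om_trans (cls (Q2,s2,D2,E2)) a y' \<longrightarrow> (\<exists>x'. om_trans (cls (Q1,s1,D1,E1)) a x' \<and> oeq n x' y')"
      and tr: "(s2, a, q2') \<in> D2"
    have "om_trans (cls (Q2,s2,D2,E2)) a (cls (Q2,q2',D2,E2))" using tr unfolding trans_cls[OF f2] by blast
    then obtain x' where x': "om_trans (cls (Q1,s1,D1,E1)) a x'" "oeq n x' (cls (Q2,q2',D2,E2))" using h by blast
    then obtain q1' where q1'0: "(s1,a,q1') \<in> D1" "x' = cls (Q1,q1',D1,E1)"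
      unfolding trans_cls[OF f1] by blast
    then have q1': "(s1,a,q1') \<in> D1" "oeq n (cls (Q1,q1',D1,E1)) (cls (Q2,q2',D2,E2))" using x' by simp_all
    then show "\<exists>q1'. (s1, a, q1') \<in> D1 \<and> sbisim n D1 E1 D2 E2 q1' q2'" using IH'[OF q1'(1) tr] by blast
  next
    fix a y' assume h: "\<forall>a q2'. (s2, a, q2') \<in> D2 \<longrightarrow> (\<exists>q1'. (s1, a, q1') \<in> D1 \<and> sbisim n D1 E1 D2 E2 q1' q2')"
      and tr: "om_trans (cls (Q2,s2,D2,E2)) a y'"
    obtain q2' where q2': "(s2,a,q2') \<in> D2" "y' = cls (Q2,q2',D2,E2)" using tr unfolding trans_cls[OF f2] by blast
    then obtain q1' where q1': "(s1,a,q1') \<in> D1" "sbisim n D1 E1 D2 E2 q1' q2'" using h by blast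
    have "om_trans (cls (Q1,s1,D1,E1)) a (cls (Q1,q1',D1,E1))" using q1' unfolding trans_cls[OF f1] by blast
    moreover have "oeq n (cls (Q1,q1',D1,E1)) y'" using IH'[OF q1'(1) q2'(1)] q1'(2) q2'(2) by simp
    ultimately show "\<exists>x'. om_trans (cls (Q1,s1,D1,E1)) a x' \<and> oeq n x' y'" by blast
  qed
  show ?case
    apply (rule trans[OF oeq.simps(2)])
    apply (rule trans[OF _ sym[OF sbisim.simps(2)]])
    apply (simp only: o t1 t2)
    done
qed



definition Sp :: "real set" where "Sp = insert 0 (range (\<lambda>m::nat. 1 / 2 ^ m))"

lemma Sp_bounds: "a \<in> Sp \<Longrightarrow> 0 \<le> a \<and> a \<le> 1"
  unfolding Sp_def by auto

lemma Sp_eq: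
  assumes "a \<in> Sp" "b \<in> Sp" "\<And>m. a \<le> 1 / 2 ^ m \<longleftrightarrow> b \<le> 1 / 2 ^ m"
  shows "a = b"
proof -
  have key: "\<And>i j. (1::real) / 2 ^ i \<le> 1 / 2 ^ j \<longleftrightarrow> j \<le> i"
    by (simp add: divide_simps)
  show ?thesis
    using assms(1,2) unfolding Sp_def
  proof (elim insertE rangeE)
    fix i assume "a = 0" "b = 1 / 2 ^ i"
    then show "a = b" using assms(3)[of "Suc i"] key[of i "Suc i"] by simp
  next
    fix i assume "b = 0" "a = 1 / 2 ^ i"
    then show "a = b" using assms(3)[of "Suc i"] key[of i "Suc i"] by simp
  next
    fix i j assume ab: "a = 1 / 2 ^ i" "b = 1 / 2 ^ j"
    then show "a = b" using assms(3)[of i] assms(3)[of j] key[of i j] key[of j i] by (simp add: ab)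
  qed simp
qed

definition dd :: "('a,'v) omega \<Rightarrow> ('a,'v) omega \<Rightarrow> real" where
  "dd x y = (if (\<forall>n. oeq n x y) then 0 else 2 / 2 ^ (LEAST n. \<not> oeq n x y))"

lemma dd_le: "dd x y \<le> 1 / 2 ^ m \<longleftrightarrow> oeq m x y"
proof (cases "\<forall>n. oeq n x y")
  case True then show ?thesis by (simp add: dd_def)
next
  case False
  define k where "k = (LEAST n. \<not> oeq n x y)"
  have ex: "\<exists>n. \<not> oeq n x y" using False by blast
  have nk: "\<not> oeq k x y" unfolding k_def using ex by (rule LeastI_ex)
  have lk: "\<And>n. n < k \<Longrightarrow> oeq n x y" unfolding k_def using not_less_Least by blast
  have "dd x y = 2 / 2 ^ k" using False by (simp add: dd_def k_def)
  moreover have "(2::real) / 2 ^ k \<le> 1 / 2 ^ m \<longleftrightarrow> m < k"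
  proof -
    have "(2::real) / 2 ^ k \<le> 1 / 2 ^ m \<longleftrightarrow> 2 * 2 ^ m \<le> (2::real) ^ k" by (simp add: divide_simps)
    also have "\<dots> \<longleftrightarrow> (2::real) ^ Suc m \<le> 2 ^ k" by simp
    also have "\<dots> \<longleftrightarrow> Suc m \<le> k" by (rule power_increasing_iff) simp
    finally show ?thesis by (simp only: Suc_le_eq)
  qed
  moreover have "m < k \<longleftrightarrow> oeq m x y"
    using lk nk oeq_mono_le[of k m x y] by (meson not_less)
  ultimately show ?thesis by simp
qed

lemma dd_Sp: "dd x y \<in> Sp"
proof (cases "\<forall>n. oeq n x y")
  case True then show ?thesis by (simp add: dd_def Sp_def)
next
  case False
  define k where "k = (LEAST n. \<not> oeq n x y)"
  have ex: "\<exists>n. \<not> oeq n x y" using False by blast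
  have nk: "\<not> oeq k x y" unfolding k_def using ex by (rule LeastI_ex)
  then obtain j where k: "k = Suc j" by (cases k) auto
  have "dd x y = 1 / 2 ^ j" using False by (simp add: dd_def k_def[symmetric] k)
  then show ?thesis unfolding Sp_def by auto
qed

lemma dd_sym: "dd x y = dd y x"
  by (rule Sp_eq[OF dd_Sp dd_Sp]) (simp add: dd_le; meson oeq_sym)

lemma dd_refl: "dd x x = 0"
  by (simp add: dd_def oeq_refl)

lemma dd_tri: "dd x z \<le> dd x y + dd y z"
proof -
  define M where "M = max (dd x y) (dd y z)"
  have "M \<in> Sp" unfolding M_def by (simp add: max_def dd_Sp)
  have "dd x z \<le> M"
  proof (cases "M = 0")
    case True
    then have "\<forall>m. oeq m x y \<and> oeq m y z"
      using dd_le Sp_bounds dd_Sp unfolding M_def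
      by (metis dual_order.trans max.cobounded1 max.cobounded2 zero_le_divide_1_iff zero_le_power zero_le_numeral)
    then have "\<forall>m. oeq m x z" using oeq_trans by blast
    then show ?thesis using True by (simp add: dd_def)
  next
    case False
    then obtain j where j: "M = 1 / 2 ^ j" using \<open>M \<in> Sp\<close> unfolding Sp_def by auto
    then have "oeq j x y" "oeq j y z" using dd_le unfolding M_def by (metis max.bounded_iff order_refl)+
    then have "oeq j x z" using oeq_trans by blast
    then have "dd x z \<le> 1 / 2 ^ j" by (simp only: dd_le)
    then show ?thesis using j by simp
  qed
  also have "M \<le> dd x y + dd y z"
  proof -
    have "0 \<le> dd x y" "0 \<le> dd y z" using Sp_bounds[OF dd_Sp] by auto
    then show ?thesis unfolding M_def by linarith
  qed
  finally show ?thesis .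
qed

section \<open>Hausdorff lemmas\<close>

lemma supr_le: "finite S \<Longrightarrow> 0 \<le> c \<Longrightarrow> supr S \<le> c \<longleftrightarrow> (\<forall>s\<in>S. s \<le> c)"
  by (auto simp: supr_def)

lemma infr_le: "finite S \<Longrightarrow> c < 1 \<Longrightarrow> infr S \<le> c \<longleftrightarrow> (\<exists>s\<in>S. s \<le> c)"
  by (auto simp: infr_def Min_le_iff)

lemma supr_ge: "finite S \<Longrightarrow> s \<in> S \<Longrightarrow> s \<le> supr S"
  by (auto simp: supr_def)

lemma infr_ge: "finite S \<Longrightarrow> c \<le> 1 \<Longrightarrow> (\<forall>s\<in>S. c \<le> s) \<Longrightarrow> c \<le> infr S"
  by (auto simp: infr_def)

lemma supr_Sp: "finite S \<Longrightarrow> S \<subseteq> Sp \<Longrightarrow> supr S \<in> Sp"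
  by (auto simp: supr_def Sp_def intro: Max_in[THEN subsetD[rotated]])

lemma infr_Sp: "finite S \<Longrightarrow> S \<subseteq> Sp \<Longrightarrow> infr S \<in> Sp"
  unfolding infr_def
  by (metis Min_in Sp_def image_eqI insertCI power_0 rangeI subsetD div_by_1)

lemma H_le:
  assumes "finite A" "finite B" "0 \<le> c" "c < 1"
  shows "hausdorff f A B \<le> c \<longleftrightarrow> (\<forall>x\<in>A. \<exists>y\<in>B. f x y \<le> c) \<and> (\<forall>y\<in>B. \<exists>x\<in>A. f y x \<le> c)"
  unfolding hausdorff_def using assms by (simp add: supr_le infr_le)

lemma H_ge1:
  assumes "finite A" "finite B" "c \<le> 1" "x \<in> A" "\<forall>y\<in>B. c \<le> f x y"
  shows "c \<le> hausdorff f A B"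
proof -
  have "c \<le> infr ((\<lambda>y. f x y) ` B)" using assms by (intro infr_ge) auto
  also have "\<dots> \<le> supr ((\<lambda>x. infr ((\<lambda>y. f x y) ` B)) ` A)" using assms by (intro supr_ge) auto
  finally show ?thesis unfolding hausdorff_def by simp
qed

lemma H_ge2:
  assumes "finite A" "finite B" "c \<le> 1" "y \<in> B" "\<forall>x\<in>A. c \<le> f y x"
  shows "c \<le> hausdorff f A B"
proof -
  have "c \<le> infr ((\<lambda>x. f y x) ` A)" using assms by (intro infr_ge) auto
  also have "\<dots> \<le> supr ((\<lambda>y. infr ((\<lambda>x. f y x) ` A)) ` B)" using assms by (intro supr_ge) auto
  finally show ?thesis unfolding hausdorff_def by simp
qed

lemma H_Sp:
  assumes "finite A" "finite B" "\<And>x y. f x y \<in> Sp"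
  shows "hausdorff f A B \<in> Sp"
  unfolding hausdorff_def using assms
  by (auto simp: max_def intro!: supr_Sp infr_Sp)



definition dr :: "('a,'v) omega \<Rightarrow> ('a,'v) omega \<Rightarrow> real" where
  "dr x y = (if x \<in> Omega \<and> y \<in> Omega then dd x y else 0)"

lemma lift_simps[simp]:
  "lift d (Inl (a,x)) (Inl (b,y)) = (if a = b then d x y / 2 else 1)"
  "lift d (Inr v) (Inr w) = (if v = w then 0 else 1)"
  "lift d (Inl p) (Inr w) = 1"
  "lift d (Inr v) (Inl p) = 1"
  by (auto simp: lift_def split: prod.splits)

lemma dr_Sp: "dr x y \<in> Sp"
proof (cases "x \<in> Omega \<and> y \<in> Omega")
  case True then show ?thesis using dd_Sp[of x y] by (simp add: dr_def)
next
  case False then show ?thesis unfolding dr_def by (auto simp: Sp_def)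
qed

lemma pow_gt1: "(1::real) < 2 * 2 ^ j"
proof -
  have "(1::real) \<le> 2 ^ j" by (rule one_le_power) simp
  then show ?thesis by linarith
qed

lemma lift_dr_Sp: "lift dr e1 e2 \<in> Sp"
proof -
  have h: "a / 2 \<in> Sp" if "a \<in> Sp" for a :: real
  proof -
    from that consider "a = 0" | m where "a = 1 / 2 ^ m" unfolding Sp_def by auto
    then show ?thesis
    proof cases
      case 1 then show ?thesis by (simp add: Sp_def)
    next
      case 2
      then have "a / 2 = 1 / 2 ^ Suc m" by simp
      then show ?thesis unfolding Sp_def by blast
    qed
  qed
  have one: "(1::real) \<in> Sp" unfolding Sp_def by (auto intro: range_eqI[where x=0])
  have zero: "(0::real) \<in> Sp" unfolding Sp_def by auto
  show ?thesis
    by (cases e1; cases e2) (auto simp: h dr_Sp one zero)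
qed

lemma lift_dr_le:
  assumes "\<And>a x. Inl (a,x) \<in> A \<Longrightarrow> x \<in> Omega" "\<And>a x. Inl (a,x) \<in> B \<Longrightarrow> x \<in> Omega"
    "e1 \<in> A" "e2 \<in> B"
  shows "lift dr e1 e2 \<le> 1 / 2 ^ Suc j \<longleftrightarrow>
    (\<exists>v. e1 = Inr v \<and> e2 = Inr v) \<or> (\<exists>a x y. e1 = Inl (a,x) \<and> e2 = Inl (a,y) \<and> oeq j x y)"
proof -
  have lt: "\<not> (1::real) \<le> 1 / 2 ^ Suc j" using pow_gt1[of j] by (simp add: divide_simps)
  have d2: "\<And>x y. x \<in> Omega \<Longrightarrow> y \<in> Omega \<Longrightarrow> dr x y / 2 \<le> 1 / 2 ^ Suc j \<longleftrightarrow> oeq j x y"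
    by (simp add: dr_def dd_le[symmetric] divide_simps)
  show ?thesis
  proof (cases e1)
    case (Inl p1)
    then obtain a x where e1: "e1 = Inl (a,x)" by (cases p1) auto
    show ?thesis
    proof (cases e2)
      case (Inl p2)
      then obtain b y where e2: "e2 = Inl (b,y)" by (cases p2) auto
      have "x \<in> Omega" "y \<in> Omega" using assms e1 e2 by auto
      then show ?thesis using e1 e2 d2 lt by auto
    qed (use e1 lt in auto)
  next
    case (Inr v)
    then show ?thesis using lt by (cases e2) auto
  qed
qed

lemma beta_Inl_Omega: "w \<in> Omega \<Longrightarrow> Inl (a,x) \<in> om_beta w \<Longrightarrow> x \<in> Omega"
  using Omega_trans by simp

lemma Phi_char:
  assumes x: "x \<in> Omega" and y: "y \<in> Omega"
  shows "hausdorff (lift dr) (om_beta x) (om_beta y) \<le> 1 / 2 ^ m \<longleftrightarrow> oeq m x y"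
proof (cases m)
  case 0
  have "hausdorff (lift dr) (om_beta x) (om_beta y) \<in> Sp"
    using beta_finite x y lift_dr_Sp by (intro H_Sp) auto
  then show ?thesis using 0 Sp_bounds by simp
next
  case (Suc j)
  have c: "0 \<le> (1::real) / 2 ^ Suc j" "(1::real) / 2 ^ Suc j < 1" using pow_gt1[of j] by (auto simp: divide_simps)
  have fx: "finite (om_beta x)" and fy: "finite (om_beta y)" using beta_finite x y by auto
  have L1: "\<And>e1 e2. e1 \<in> om_beta x \<Longrightarrow> e2 \<in> om_beta y \<Longrightarrow> lift dr e1 e2 \<le> 1 / 2 ^ Suc j \<longleftrightarrow>
    (\<exists>v. e1 = Inr v \<and> e2 = Inr v) \<or> (\<exists>a x y. e1 = Inl (a,x) \<and> e2 = Inl (a,y) \<and> oeq j x y)"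
    by (rule lift_dr_le) (use beta_Inl_Omega x y in auto)
  have L2: "\<And>e1 e2. e2 \<in> om_beta y \<Longrightarrow> e1 \<in> om_beta x \<Longrightarrow> lift dr e2 e1 \<le> 1 / 2 ^ Suc j \<longleftrightarrow>
    (\<exists>v. e2 = Inr v \<and> e1 = Inr v) \<or> (\<exists>a x y. e2 = Inl (a,y) \<and> e1 = Inl (a,x) \<and> oeq j x y)"
  proof -
    fix e1 e2 assume "e2 \<in> om_beta y" "e1 \<in> om_beta x"
    then have "lift dr e2 e1 \<le> 1 / 2 ^ Suc j \<longleftrightarrow>
      (\<exists>v. e2 = Inr v \<and> e1 = Inr v) \<or> (\<exists>a y x. e2 = Inl (a,y) \<and> e1 = Inl (a,x) \<and> oeq j y x)"
      by (intro lift_dr_le) (use beta_Inl_Omega x y in auto)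
    then show "?thesis e1 e2" using oeq_sym by blast
  qed
  have "hausdorff (lift dr) (om_beta x) (om_beta y) \<le> 1 / 2 ^ Suc j \<longleftrightarrow>
     (\<forall>e1\<in>om_beta x. \<exists>e2\<in>om_beta y. lift dr e1 e2 \<le> 1 / 2 ^ Suc j) \<and>
     (\<forall>e2\<in>om_beta y. \<exists>e1\<in>om_beta x. lift dr e2 e1 \<le> 1 / 2 ^ Suc j)"
    by (rule H_le[OF fx fy c])
  also have "\<dots> \<longleftrightarrow> oeq (Suc j) x y"
  proof -
    have A: "(\<forall>e1\<in>om_beta x. \<exists>e2\<in>om_beta y. lift dr e1 e2 \<le> 1 / 2 ^ Suc j) \<longleftrightarrow>
      (\<forall>v. om_out x v \<longrightarrow> om_out y v) \<and> (\<forall>a x'. om_trans x a x' \<longrightarrow> (\<exists>y'. om_trans y a y' \<and> oeq j x' y'))"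
    proof
      assume h: "\<forall>e1\<in>om_beta x. \<exists>e2\<in>om_beta y. lift dr e1 e2 \<le> 1 / 2 ^ Suc j"
      show "(\<forall>v. om_out x v \<longrightarrow> om_out y v) \<and> (\<forall>a x'. om_trans x a x' \<longrightarrow> (\<exists>y'. om_trans y a y' \<and> oeq j x' y'))"
      proof (intro conjI allI impI)
        fix v assume "om_out x v"
        then obtain e2 where "e2 \<in> om_beta y" "lift dr (Inr v) e2 \<le> 1 / 2 ^ Suc j" using h by fastforce
        then show "om_out y v" using L1[of "Inr v" e2] \<open>om_out x v\<close> by auto
      next
        fix a x' assume "om_trans x a x'"
        then obtain e2 where "e2 \<in> om_beta y" "lift dr (Inl (a,x')) e2 \<le> 1 / 2 ^ Suc j" using h by fastforce
        then show "\<exists>y'. om_trans y a y' \<and> oeq j x' y'" using L1[of "Inl (a,x')" e2] \<open>om_trans x a x'\<close> by auto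
      qed
    next
      assume h: "(\<forall>v. om_out x v \<longrightarrow> om_out y v) \<and> (\<forall>a x'. om_trans x a x' \<longrightarrow> (\<exists>y'. om_trans y a y' \<and> oeq j x' y'))"
      show "\<forall>e1\<in>om_beta x. \<exists>e2\<in>om_beta y. lift dr e1 e2 \<le> 1 / 2 ^ Suc j"
      proof
        fix e1 assume e1: "e1 \<in> om_beta x"
        show "\<exists>e2\<in>om_beta y. lift dr e1 e2 \<le> 1 / 2 ^ Suc j"
        proof (cases e1)
          case (Inl p)
          then obtain a x' where p: "e1 = Inl (a,x')" by (cases p) auto
          have "om_trans x a x'" using e1 p by simp
          then obtain y' where "om_trans y a y'" "oeq j x' y'" using h by blast
          then have m: "Inl (a,y') \<in> om_beta y" "oeq j x' y'" by simp_all
          have "lift dr e1 (Inl (a,y')) \<le> 1 / 2 ^ Suc j" using L1[OF e1 m(1)] p m(2) by blast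
          then show ?thesis using m(1) by blast
        next
          case (Inr v)
          then have m: "Inr v \<in> om_beta y" using e1 h by simp
          have "lift dr e1 (Inr v) \<le> 1 / 2 ^ Suc j" using L1[OF e1 m] Inr by blast
          then show ?thesis using m by blast
        qed
      qed
    qed
    have B: "(\<forall>e2\<in>om_beta y. \<exists>e1\<in>om_beta x. lift dr e2 e1 \<le> 1 / 2 ^ Suc j) \<longleftrightarrow>
      (\<forall>v. om_out y v \<longrightarrow> om_out x v) \<and> (\<forall>a y'. om_trans y a y' \<longrightarrow> (\<exists>x'. om_trans x a x' \<and> oeq j x' y'))"
    proof
      assume h: "\<forall>e2\<in>om_beta y. \<exists>e1\<in>om_beta x. lift dr e2 e1 \<le> 1 / 2 ^ Suc j"
      show "(\<forall>v. om_out y v \<longrightarrow> om_out x v) \<and> (\<forall>a y'. om_trans y a y' \<longrightarrow> (\<exists>x'. om_trans x a x' \<and> oeq j x' y'))"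
      proof (intro conjI allI impI)
        fix v assume "om_out y v"
        then obtain e1 where "e1 \<in> om_beta x" "lift dr (Inr v) e1 \<le> 1 / 2 ^ Suc j" using h by fastforce
        then show "om_out x v" using L2[of "Inr v" e1] \<open>om_out y v\<close> by auto
      next
        fix a y' assume "om_trans y a y'"
        then obtain e1 where "e1 \<in> om_beta x" "lift dr (Inl (a,y')) e1 \<le> 1 / 2 ^ Suc j" using h by fastforce
        then show "\<exists>x'. om_trans x a x' \<and> oeq j x' y'" using L2[of "Inl (a,y')" e1] \<open>om_trans y a y'\<close> by auto
      qed
    next
      assume h: "(\<forall>v. om_out y v \<longrightarrow> om_out x v) \<and> (\<forall>a y'. om_trans y a y' \<longrightarrow> (\<exists>x'. om_trans x a x' \<and> oeq j x' y'))"
      show "\<forall>e2\<in>om_beta y. \<exists>e1\<in>om_beta x. lift dr e2 e1 \<le> 1 / 2 ^ Suc j"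
      proof
        fix e2 assume e2: "e2 \<in> om_beta y"
        show "\<exists>e1\<in>om_beta x. lift dr e2 e1 \<le> 1 / 2 ^ Suc j"
        proof (cases e2)
          case (Inl p)
          then obtain a y' where p: "e2 = Inl (a,y')" by (cases p) auto
          have "om_trans y a y'" using e2 p by simp
          then obtain x' where "om_trans x a x'" "oeq j x' y'" using h by blast
          then have m: "Inl (a,x') \<in> om_beta x" "oeq j x' y'" by simp_all
          have "lift dr e2 (Inl (a,x')) \<le> 1 / 2 ^ Suc j" using L2[OF e2 m(1)] p m(2) by blast
          then show ?thesis using m(1) by blast
        next
          case (Inr v)
          then have m: "Inr v \<in> om_beta x" using e2 h by simp
          have "lift dr e2 (Inr v) \<le> 1 / 2 ^ Suc j" using L2[OF e2 m] Inr by blast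
          then show ?thesis using m by blast
        qed
      qed
    qed
    show ?thesis unfolding A B oeq.simps by blast
  qed
  finally show ?thesis using Suc by simp
qed

lemma Phi_fix: "Phi Omega om_beta dr = dr"
proof (intro ext)
  fix x y
  show "Phi Omega om_beta dr x y = dr x y"
  proof (cases "x \<in> Omega \<and> y \<in> Omega")
    case True
    have "hausdorff (lift dr) (om_beta x) (om_beta y) = dd x y"
    proof (rule Sp_eq)
      show "hausdorff (lift dr) (om_beta x) (om_beta y) \<in> Sp"
        using beta_finite True lift_dr_Sp by (intro H_Sp) auto
      show "dd x y \<in> Sp" by (rule dd_Sp)
      show "\<And>m. hausdorff (lift dr) (om_beta x) (om_beta y) \<le> 1 / 2 ^ m \<longleftrightarrow> dd x y \<le> 1 / 2 ^ m"
        using Phi_char True dd_le by blast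
    qed
    then show ?thesis using True by (simp add: Phi_def dr_def)
  next
    case False then show ?thesis by (auto simp: Phi_def dr_def)
  qed
qed

lemma dr_DX: "dr \<in> DX Omega"
  unfolding DX_def pseudometric_on_def
  using Sp_bounds[OF dd_Sp] dd_refl dd_sym dd_tri by (auto simp: dr_def)

lemma dr_least:
  fixes d :: "('a,'v) omega \<Rightarrow> ('a,'v) omega \<Rightarrow> real"
  assumes d: "d \<in> DX Omega" and fxp: "Phi Omega om_beta d = d"
  shows "dr x y \<le> d x y"
proof -
  have pm: "pseudometric_on Omega d" using d by (simp add: DX_def)
  have nn: "\<And>x y. x \<in> Omega \<Longrightarrow> y \<in> Omega \<Longrightarrow> 0 \<le> d x y" using pm by (simp add: pseudometric_on_def)
  have sy: "\<And>x y. x \<in> Omega \<Longrightarrow> y \<in> Omega \<Longrightarrow> d x y = d y x" using pm by (simp add: pseudometric_on_def)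
  have hd: "\<And>x y. x \<in> Omega \<Longrightarrow> y \<in> Omega \<Longrightarrow> d x y = hausdorff (lift d) (om_beta x) (om_beta y)"
  proof -
    fix x y :: "('a,'v) omega" assume "x \<in> Omega" "y \<in> Omega"
    have "d x y = Phi Omega om_beta d x y" using fxp by simp
    also have "\<dots> = hausdorff (lift d) (om_beta x) (om_beta y)"
      unfolding Phi_def using \<open>x \<in> Omega\<close> \<open>y \<in> Omega\<close> by simp
    finally show "d x y = hausdorff (lift d) (om_beta x) (om_beta y)" .
  qed
  have low: "\<And>x y. x \<in> Omega \<Longrightarrow> y \<in> Omega \<Longrightarrow> \<not> oeq n x y \<Longrightarrow> 2 / 2 ^ n \<le> d x y" for n
  proof (induction n)
    case 0 then show ?case by simp
  next
    case (Suc n)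
    note x = Suc.prems(1) and y = Suc.prems(2)
    have fx: "finite (om_beta x)" and fy: "finite (om_beta y)" using beta_finite x y by auto
    have c: "(2::real) / 2 ^ Suc n = 1 / 2 ^ n" by simp
    have c1: "(1::real) / 2 ^ n \<le> 1" by (simp add: divide_simps)
    have "2 / 2 ^ Suc n \<le> hausdorff (lift d) (om_beta x) (om_beta y)"
      unfolding c
    proof -
      from Suc.prems(3) consider
        (o1) v where "om_out x v" "\<not> om_out y v"
      | (o2) v where "om_out y v" "\<not> om_out x v"
      | (t1) a x' where "om_trans x a x'" "\<forall>y'. om_trans y a y' \<longrightarrow> \<not> oeq n x' y'"
      | (t2) a y' where "om_trans y a y'" "\<forall>x'. om_trans x a x' \<longrightarrow> \<not> oeq n x' y'"
      proof -
        have "\<not> ((\<forall>v. om_out x v \<longleftrightarrow> om_out y v) \<and>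
           (\<forall>a x'. om_trans x a x' \<longrightarrow> (\<exists>y'. om_trans y a y' \<and> oeq n x' y')) \<and>
           (\<forall>a y'. om_trans y a y' \<longrightarrow> (\<exists>x'. om_trans x a x' \<and> oeq n x' y')))"
          using Suc.prems(3) oeq.simps(2)[of n x y] by simp
        then show ?thesis using that by blast
      qed
      then show "1 / 2 ^ n \<le> hausdorff (lift d) (om_beta x) (om_beta y)"
      proof cases
        case o1
        have "\<forall>e2\<in>om_beta y. 1 / 2 ^ n \<le> lift d (Inr v) e2"
        proof
          fix e2 assume "e2 \<in> om_beta y" then show "1 / 2 ^ n \<le> lift d (Inr v) e2"
            using o1 c1 by (cases e2) auto
        qed
        then show ?thesis using o1 by (intro H_ge1[OF fx fy c1, of "Inr v"]) auto
      next
        case o2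
        have "\<forall>e1\<in>om_beta x. 1 / 2 ^ n \<le> lift d (Inr v) e1"
        proof
          fix e1 assume "e1 \<in> om_beta x" then show "1 / 2 ^ n \<le> lift d (Inr v) e1"
            using o2 c1 by (cases e1) auto
        qed
        then show ?thesis using o2 by (intro H_ge2[OF fx fy c1, of "Inr v"]) auto
      next
        case t1
        have x': "x' \<in> Omega" by (rule Omega_trans[OF x t1(1)])
        have "\<forall>e2\<in>om_beta y. 1 / 2 ^ n \<le> lift d (Inl (a,x')) e2"
        proof
          fix e2 assume e2: "e2 \<in> om_beta y" then show "1 / 2 ^ n \<le> lift d (Inl (a,x')) e2"
          proof (cases e2)
            case (Inl p)
            then obtain b y' where p: "e2 = Inl (b,y')" by (cases p) auto
            show ?thesis
            proof (cases "b = a")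
              case True
              then have tr: "om_trans y a y'" using e2 p by simp
              then have yO: "y' \<in> Omega" by (rule Omega_trans[OF y])
              have "\<not> oeq n x' y'" using t1(2) tr by blast
              then have "2 / 2 ^ n \<le> d x' y'" by (rule Suc.IH[OF x' yO])
              then show ?thesis using p True by simp
            qed (use p c1 in simp)
          qed (use c1 in simp)
        qed
        then show ?thesis using t1 by (intro H_ge1[OF fx fy c1, of "Inl (a,x')"]) auto
      next
        case t2
        have y': "y' \<in> Omega" by (rule Omega_trans[OF y t2(1)])
        have "\<forall>e1\<in>om_beta x. 1 / 2 ^ n \<le> lift d (Inl (a,y')) e1"
        proof
          fix e1 assume e1: "e1 \<in> om_beta x" then show "1 / 2 ^ n \<le> lift d (Inl (a,y')) e1"
          proof (cases e1)
            case (Inl p)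
            then obtain b x' where p: "e1 = Inl (b,x')" by (cases p) auto
            show ?thesis
            proof (cases "b = a")
              case True
              then have tr: "om_trans x a x'" using e1 p by simp
              then have xO: "x' \<in> Omega" by (rule Omega_trans[OF x])
              have "\<not> oeq n x' y'" using t2(2) tr by blast
              then have "2 / 2 ^ n \<le> d x' y'" by (rule Suc.IH[OF xO y'])
              then have "2 / 2 ^ n \<le> d y' x'" using sy[OF xO y'] by simp
              then show ?thesis using p True by simp
            qed (use p c1 in simp)
          qed (use c1 in simp)
        qed
        then show ?thesis using t2 by (intro H_ge2[OF fx fy c1, of "Inl (a,y')"]) auto
      qed
    qed
    then show ?case using hd[OF x y] by simp
  qed
  show ?thesis
  proof (cases "x \<in> Omega \<and> y \<in> Omega")
    case True
    show ?thesis
    proof (cases "\<forall>n. oeq n x y")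
      case True2: True
      then show ?thesis using True nn by (simp add: dr_def dd_def)
    next
      case False
      define k where "k = (LEAST n. \<not> oeq n x y)"
      have ex: "\<exists>n. \<not> oeq n x y" using False by blast
      have nk: "\<not> oeq k x y" unfolding k_def using ex by (rule LeastI_ex)
      have "dr x y = 2 / 2 ^ k" using False True by (simp add: dr_def dd_def k_def)
      then show ?thesis using low[of x y k] True nk by simp
    qed
  next
    case False
    then have "d x y = 0" using d by (auto simp: DX_def)
    moreover have "dr x y = 0" using False unfolding dr_def by auto
    ultimately show ?thesis by simp
  qed
qed

lemma bd_eq: "bd = dr"
proof -
  have "bd_of Omega om_beta = dr"
    unfolding bd_of_def
  proof (rule the_equality)
    show "dr \<in> DX Omega \<and> Phi Omega om_beta dr = dr \<and>
      (\<forall>d'\<in>DX Omega. Phi Omega om_beta d' = d' \<longrightarrow> (\<forall>x y. dr x y \<le> d' x y))"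
      using dr_DX Phi_fix dr_least by blast
  next
    fix d assume h: "d \<in> DX Omega \<and> Phi Omega om_beta d = d \<and>
      (\<forall>d'\<in>DX Omega. Phi Omega om_beta d' = d' \<longrightarrow> (\<forall>x y. d x y \<le> d' x y))"
    show "d = dr"
    proof (intro ext)
      fix x y
      have "d x y \<le> dr x y" using h dr_DX Phi_fix by blast
      moreover have "dr x y \<le> d x y" using h dr_least by blast
      ultimately show "d x y = dr x y" by simp
    qed
  qed
  then show ?thesis by (simp add: bd_def)
qed



theorem mainTheorem1:
  fixes C1 :: "('q1, 'a, 'v) chart" and C2 :: "('q2, 'a, 'v) chart"
    and Q1 :: "'q1 set" and s1 :: 'q1 and D1 and E1
    and Q2 :: "'q2 set" and s2 :: 'q2 and D2 and E2
  assumes "C1 = (Q1, s1, D1, E1)" and "C2 = (Q2, s2, D2, E2)"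
    and "finite_chart C1" and "finite_chart C2"
  shows "(chart_bisim C1 C2 \<longrightarrow> bd (cls C1) (cls C2) = 0) \<and>
         (\<not> chart_bisim C1 C2 \<longrightarrow>
            (\<exists>n. sbisim n D1 E1 D2 E2 s1 s2 \<and>
                 (\<forall>m. sbisim m D1 E1 D2 E2 s1 s2 \<longrightarrow> m \<le> n) \<and>
                 bd (cls C1) (cls C2) = 1 / 2 ^ n))"
proof (intro conjI impI)
  assume "chart_bisim C1 C2"
  then have "cls C1 = cls C2" by (rule cls_eq)
  then show "bd (cls C1) (cls C2) = 0" by (simp add: bd_eq dr_def dd_refl)
next
  assume nb: "\<not> chart_bisim C1 C2"
  have f1: "finite_chart (Q1,s1,D1,E1)" and f2: "finite_chart (Q2,s2,D2,E2)" using assms by auto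
  have ex: "\<exists>n. \<not> sbisim n D1 E1 D2 E2 s1 s2"
    using nb all_sbisim_bisim[OF f1 f2] assms(1,2) by blast
  have eq: "\<And>n. oeq n (cls C1) (cls C2) \<longleftrightarrow> sbisim n D1 E1 D2 E2 s1 s2"
    using oeq_sbisim[OF f1 f2] assms(1,2) by simp
  define k where "k = (LEAST n. \<not> sbisim n D1 E1 D2 E2 s1 s2)"
  have nk: "\<not> sbisim k D1 E1 D2 E2 s1 s2" unfolding k_def using ex by (rule LeastI_ex)
  have lk: "\<And>n. n < k \<Longrightarrow> sbisim n D1 E1 D2 E2 s1 s2" unfolding k_def using not_less_Least by blast
  obtain j where kj: "k = Suc j" using nk by (cases k) auto
  have in1: "cls C1 \<in> Omega" "cls C2 \<in> Omega" using assms cls_in_Omega by auto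
  have k': "(LEAST n. \<not> oeq n (cls C1) (cls C2)) = k" unfolding eq k_def ..
  have "bd (cls C1) (cls C2) = 2 / 2 ^ k"
    using in1 ex by (simp add: bd_eq dr_def dd_def eq k_def[symmetric])
  also have "\<dots> = 1 / 2 ^ j" using kj by simp
  finally have "bd (cls C1) (cls C2) = 1 / 2 ^ j" .
  moreover have "sbisim j D1 E1 D2 E2 s1 s2" using lk kj by simp
  moreover have "\<forall>m. sbisim m D1 E1 D2 E2 s1 s2 \<longrightarrow> m \<le> j"
    using nk kj sbisim_mono_le by (metis not_less_eq_eq)
  ultimately show "\<exists>n. sbisim n D1 E1 D2 E2 s1 s2 \<and>
                 (\<forall>m. sbisim m D1 E1 D2 E2 s1 s2 \<longrightarrow> m \<le> n) \<and>
                 bd (cls C1) (cls C2) = 1 / 2 ^ n" by blast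
qed

end
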